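(* Let $F$ be a diagonal free self-map of $\mathbb{T}^n$. Then $\mathcal{S}(F)$ contains a Hilbert ball $B_H(z,r)$ with $z\in\mathbb{R}^n$ and $r>0$ if and only if $\underline{\mathrm{cw}}(F)>0$. Moreover, in that case, \[ \sup\{r\ge 0 : \exists z\in\mathbb{R}^n,\ B_H(z,r)\subseteq\mathcal{S}(F)\} = \underline{\mathrm{cw}}(F). \]
   Context: $\mathbb{T}=\mathbb{R}\cup\{-\infty\}$, ordered entrywise on $\mathbb{T}^n$. A self-map $F$ of $\mathbb{T}^n$ is order-preserving if $x\le y\Rightarrow F(x)\le F(y)$, and additively homogeneous if $F(\lambda+x)=\lambda+F(x)$ for all $\lambda\in\mathbb{T}$, $x\in\mathbb{T}^n$. An order-preserving, additively homogeneous self-map $F$ of $\mathbb{T}^n$ is diagonal free if for every $i$ and all $x,y\in\mathbb{R}^n$ with $x_j=y_j$ for all $j\ne i$, $F_i(x)=F_i(y)$. $\mathbf{t}(x)=\max_i x_i$, $\mathbf{b}(x)=\min_i x_i$, $\|x\|_H=\mathbf{t}(x)-\mathbf{b}(x)$ on $\mathbb{R}^n$, $B_H(z,r)=\{x\in\mathbb{R}^n: \|x-z\|_H\le r\}$. $\mathcal{S}(F)=\{x\in\mathbb{T}^n: x\le F(x)\}$. The lower Collatz–Wielandt number is $\underline{\mathrm{cw}}(F)=\sup\{\mu\in\mathbb{R}: \exists z\in\mathbb{R}^n,\ F(z)\ge\mu+z\}$. *)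

theory Defs
  imports "HOL-Analysis.Analysis"
begin

text \<open>The tropical semifield T = R \<union> {-\<infinity>} is represented inside ereal as the
values different from \<infinity>; points of T^n are functions 'n \<Rightarrow> ereal (with 'n a
finite index type) none of whose entries is \<infinity>.\<close>

definition Tn :: "('n::finite \<Rightarrow> ereal) set" where
  "Tn = {x. \<forall>i. x i \<noteq> \<infinity>}"

definition order_preserving :: "(('n::finite \<Rightarrow> ereal) \<Rightarrow> ('n \<Rightarrow> ereal)) \<Rightarrow> bool" where
  "order_preserving F \<longleftrightarrow> (\<forall>x\<in>Tn. \<forall>y\<in>Tn. x \<le> y \<longrightarrow> F x \<le> F y)"

definition additively_homogeneous :: "(('n::finite \<Rightarrow> ereal) \<Rightarrow> ('n \<Rightarrow> ereal)) \<Rightarrow> bool" where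
  "additively_homogeneous F \<longleftrightarrow>
     (\<forall>l. l \<noteq> \<infinity> \<longrightarrow> (\<forall>x\<in>Tn. F (\<lambda>i. l + x i) = (\<lambda>i. l + F x i)))"

definition self_map_Tn :: "(('n::finite \<Rightarrow> ereal) \<Rightarrow> ('n \<Rightarrow> ereal)) \<Rightarrow> bool" where
  "self_map_Tn F \<longleftrightarrow> (\<forall>x\<in>Tn. F x \<in> Tn)"

definition emb :: "('n \<Rightarrow> real) \<Rightarrow> ('n \<Rightarrow> ereal)" where
  "emb x = (\<lambda>i. ereal (x i))"

definition diagonal_free :: "(('n::finite \<Rightarrow> ereal) \<Rightarrow> ('n \<Rightarrow> ereal)) \<Rightarrow> bool" where
  "diagonal_free F \<longleftrightarrow> self_map_Tn F \<and> order_preserving F \<and> additively_homogeneous F \<and>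
     (\<forall>i. \<forall>x y :: 'n \<Rightarrow> real. (\<forall>j. j \<noteq> i \<longrightarrow> x j = y j) \<longrightarrow> F (emb x) i = F (emb y) i)"

definition top_v :: "('n::finite \<Rightarrow> real) \<Rightarrow> real" where
  "top_v x = Max (range x)"

definition bot_v :: "('n::finite \<Rightarrow> real) \<Rightarrow> real" where
  "bot_v x = Min (range x)"

definition hilbert_norm :: "('n::finite \<Rightarrow> real) \<Rightarrow> real" where
  "hilbert_norm x = top_v x - bot_v x"

definition hilbert_ball :: "('n::finite \<Rightarrow> real) \<Rightarrow> real \<Rightarrow> ('n \<Rightarrow> real) set" where
  "hilbert_ball z r = {x. hilbert_norm (x - z) \<le> r}"

definition subeig :: "(('n::finite \<Rightarrow> ereal) \<Rightarrow> ('n \<Rightarrow> ereal)) \<Rightarrow> ('n \<Rightarrow> ereal) set" where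
  "subeig F = {x\<in>Tn. x \<le> F x}"

text \<open>Lower Collatz--Wielandt number; the supremum is taken in ereal
(so it is -\<infinity> if no such \<mu> exists).\<close>
definition lower_cw :: "(('n::finite \<Rightarrow> ereal) \<Rightarrow> ('n \<Rightarrow> ereal)) \<Rightarrow> ereal" where
  "lower_cw F = Sup (ereal ` {\<mu>::real. \<exists>z::'n \<Rightarrow> real. (\<lambda>i. ereal (\<mu> + z i)) \<le> F (emb z)})"

end

theory Submission
  imports Defs
begin

lemma emb_Tn: "emb x \<in> Tn"
  by (simp add: Tn_def emb_def)

lemma hn_bounds:
  fixes x :: "'n::finite \<Rightarrow> real"
  assumes "hilbert_norm x \<le> r"
  shows "x i - r \<le> x j"
proof -
  have "x i \<le> Max (range x)" by simp
  moreover have "Min (range x) \<le> x j" by simp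
  ultimately show ?thesis using assms unfolding hilbert_norm_def top_v_def bot_v_def by linarith
qed

lemma hn_le:
  fixes x :: "'n::finite \<Rightarrow> real"
  assumes "\<And>j. a \<le> x j" "\<And>j. x j \<le> b"
  shows "hilbert_norm x \<le> b - a"
proof -
  have "Max (range x) \<le> b" using assms(2) by (simp add: Max_le_iff)
  moreover have "a \<le> Min (range x)" using assms(1) by (simp add: Min_ge_iff)
  ultimately show ?thesis unfolding hilbert_norm_def top_v_def bot_v_def by linarith
qed

lemma shift_emb:
  assumes "diagonal_free F"
  shows "F (emb (\<lambda>j. c + z j)) = (\<lambda>i. ereal c + F (emb z) i)"
proof -
  have ah: "additively_homogeneous F" using assms by (simp add: diagonal_free_def)
  have "F (\<lambda>j. ereal c + emb z j) = (\<lambda>i. ereal c + F (emb z) i)"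
    using ah emb_Tn[of z] unfolding additively_homogeneous_def by simp
  moreover have "(\<lambda>j. ereal c + emb z j) = emb (\<lambda>j. c + z j)" by (simp add: emb_def)
  ultimately show ?thesis by simp
qed

lemma key:
  fixes F :: "('n::finite \<Rightarrow> ereal) \<Rightarrow> ('n \<Rightarrow> ereal)"
  assumes df: "diagonal_free F" and r: "r \<ge> 0"
  shows "(emb ` hilbert_ball z r \<subseteq> subeig F) \<longleftrightarrow> (\<lambda>i. ereal (r + z i)) \<le> F (emb z)"
proof
  have dg: "\<And>i x y. (\<forall>j. j \<noteq> i \<longrightarrow> x j = y j) \<Longrightarrow> F (emb x) i = F (emb y) i"
    using df by (simp add: diagonal_free_def)
  assume H: "emb ` hilbert_ball z r \<subseteq> subeig F"
  show "(\<lambda>i. ereal (r + z i)) \<le> F (emb z)"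
  proof (rule le_funI)
    fix i
    define x where "x = (\<lambda>j. if j = i then z i else z j - r)"
    have "hilbert_norm (x - z) \<le> 0 - (-r)"
      by (rule hn_le) (auto simp: x_def r)
    hence "x \<in> hilbert_ball z r" by (simp add: hilbert_ball_def)
    hence "emb x \<le> F (emb x)" using H by (auto simp: subeig_def)
    hence "emb x i \<le> F (emb x) i" by (simp add: le_fun_def)
    hence "ereal (z i) \<le> F (emb x) i" by (simp add: emb_def x_def)
    also have "F (emb x) i = F (emb (\<lambda>j. (-r) + z j)) i"
      by (rule dg) (simp add: x_def)
    also have "\<dots> = ereal (-r) + F (emb z) i" using shift_emb[OF df, of "-r" z] by simp
    finally have a: "ereal (z i) \<le> ereal (-r) + F (emb z) i" .
    show "ereal (r + z i) \<le> F (emb z) i"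
    proof (cases "F (emb z) i")
      case (real v) thus ?thesis using a by simp
    next
      case PInf thus ?thesis by simp
    next
      case MInf thus ?thesis using a by simp
    qed
  qed
next
  have dg: "\<And>i x y. (\<forall>j. j \<noteq> i \<longrightarrow> x j = y j) \<Longrightarrow> F (emb x) i = F (emb y) i"
    using df by (simp add: diagonal_free_def)
  have op: "order_preserving F" using df by (simp add: diagonal_free_def)
  assume H: "(\<lambda>i. ereal (r + z i)) \<le> F (emb z)"
  show "emb ` hilbert_ball z r \<subseteq> subeig F"
  proof
    fix w assume "w \<in> emb ` hilbert_ball z r"
    then obtain x where w: "w = emb x" and xb: "hilbert_norm (x - z) \<le> r"
      by (auto simp: hilbert_ball_def)
    have "emb x \<le> F (emb x)"
    proof (rule le_funI)
      fix i
      define t where "t = x i - z i"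
      define y where "y = (\<lambda>j. if j = i then x i else t - r + z j)"
      have "emb y \<le> emb x"
      proof (rule le_funI)
        fix j
        have "(x - z) i - r \<le> (x - z) j" by (rule hn_bounds[OF xb])
        thus "emb y j \<le> emb x j" by (simp add: emb_def y_def t_def)
      qed
      hence "F (emb y) \<le> F (emb x)" using op emb_Tn unfolding order_preserving_def by blast
      hence b: "F (emb y) i \<le> F (emb x) i" by (simp add: le_fun_def)
      have "F (emb y) i = F (emb (\<lambda>j. (t - r) + z j)) i"
        by (rule dg) (simp add: y_def)
      also have "\<dots> = ereal (t - r) + F (emb z) i" using shift_emb[OF df] by simp
      finally have c: "F (emb y) i = ereal (t - r) + F (emb z) i" .
      have d: "ereal (r + z i) \<le> F (emb z) i" using H by (simp add: le_fun_def)
      have "ereal (x i) = ereal (t - r) + ereal (r + z i)" by (simp add: t_def)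
      also have "\<dots> \<le> ereal (t - r) + F (emb z) i" using d by (rule add_left_mono)
      finally show "emb x i \<le> F (emb x) i" using b c by (simp add: emb_def)
    qed
    thus "w \<in> subeig F" using w by (simp add: subeig_def emb_Tn)
  qed
qed

theorem mainTheorem6:
  fixes F :: "('n::finite \<Rightarrow> ereal) \<Rightarrow> ('n \<Rightarrow> ereal)"
  assumes "diagonal_free F"
  shows "((\<exists>z r. r > 0 \<and> emb ` hilbert_ball z r \<subseteq> subeig F) \<longleftrightarrow> lower_cw F > 0)
    \<and> (lower_cw F > 0 \<longrightarrow>
         Sup (ereal ` {r. r \<ge> 0 \<and> (\<exists>z. emb ` hilbert_ball z r \<subseteq> subeig F)}) = lower_cw F)"
proof -
  define C where "C = {\<mu>::real. \<exists>z::'n \<Rightarrow> real. (\<lambda>i. ereal (\<mu> + z i)) \<le> F (emb z)}"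
  have L: "lower_cw F = Sup (ereal ` C)" by (simp add: lower_cw_def C_def)
  have R: "{r. r \<ge> 0 \<and> (\<exists>z. emb ` hilbert_ball z r \<subseteq> subeig F)} = {r \<in> C. r \<ge> 0}"
    using key[OF assms] by (auto simp: C_def)
  have P1: "(\<exists>z r. r > 0 \<and> emb ` hilbert_ball z r \<subseteq> subeig F) \<longleftrightarrow> (\<exists>r\<in>C. r > 0)"
  proof
    assume "\<exists>z r. r > 0 \<and> emb ` hilbert_ball z r \<subseteq> subeig F"
    then obtain z r where "r > 0" "emb ` hilbert_ball z r \<subseteq> subeig F" by blast
    hence "(\<lambda>i. ereal (r + z i)) \<le> F (emb z)" using key[OF assms, of r z] by simp
    thus "\<exists>r\<in>C. r > 0" using \<open>r > 0\<close> unfolding C_def by blast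
  next
    assume "\<exists>r\<in>C. r > 0"
    then obtain r z where "r > 0" "(\<lambda>i. ereal (r + z i)) \<le> F (emb z)" unfolding C_def by blast
    thus "\<exists>z r. r > 0 \<and> emb ` hilbert_ball z r \<subseteq> subeig F" using key[OF assms, of r z] by auto
  qed
  have P2: "(\<exists>r\<in>C. r > 0) \<longleftrightarrow> Sup (ereal ` C) > 0"
  proof
    assume "\<exists>r\<in>C. r > 0"
    then obtain r where "r \<in> C" "r > 0" by blast
    hence "ereal r \<le> Sup (ereal ` C)" by (simp add: Sup_upper)
    thus "Sup (ereal ` C) > 0" using \<open>r > 0\<close> by (meson ereal_less(2) less_le_trans zero_ereal_def)
  next
    assume "Sup (ereal ` C) > 0"
    then obtain y where "y \<in> ereal ` C" "0 < y" by (meson less_Sup_iff)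
    thus "\<exists>r\<in>C. r > 0" by auto
  qed
  have Q: "Sup (ereal ` C) > 0 \<Longrightarrow> Sup (ereal ` {r \<in> C. r \<ge> 0}) = Sup (ereal ` C)"
  proof (rule antisym)
    show "Sup (ereal ` {r \<in> C. r \<ge> 0}) \<le> Sup (ereal ` C)" by (rule Sup_subset_mono) auto
  next
    assume "Sup (ereal ` C) > 0"
    then obtain r0 where r0: "r0 \<in> C" "r0 > 0" using P2 by blast
    have s0: "ereal r0 \<le> Sup (ereal ` {r \<in> C. r \<ge> 0})" using r0 by (intro Sup_upper) auto
    show "Sup (ereal ` C) \<le> Sup (ereal ` {r \<in> C. r \<ge> 0})"
    proof (rule Sup_least)
      fix y assume "y \<in> ereal ` C"
      then obtain \<mu> where m: "\<mu> \<in> C" "y = ereal \<mu>" by blast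
      show "y \<le> Sup (ereal ` {r \<in> C. r \<ge> 0})"
      proof (cases "\<mu> \<ge> 0")
        case True thus ?thesis using m by (intro Sup_upper) auto
      next
        case False
        hence "ereal \<mu> \<le> ereal r0" using r0 by simp
        thus ?thesis using m s0 by (metis order_trans)
      qed
    qed
  qed
  show ?thesis using P1 P2 Q L R by simp
qed

end
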